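(* Let $a, n \in \mathbb{N}$ and let $(F, M, \mathcal{R}, c)$ be an instance of the feasibility problem such that one of the following holds: (i) $c_r \in \{a, na\}$ for all $r \in \mathcal{R}$ and $R_a \ge n-1$; or (ii) $c_r \in \{a, 2a, \dots, na\}$ for all $r \in \mathcal{R}$ and $R_{ia} > 0$ for every $i = 1, \dots, n$; or (iii) $c_r \in \{2^0 a, 2^1 a, \dots, 2^n a\}$ for all $r \in \mathcal{R}$ and $R_{2^i a} > 0$ for every $i = 0, \dots, n$. Then the instance is feasible if and only if $$\left\lceil \frac{F}{a} \right\rceil + \left\lceil \frac{M}{a} \right\rceil \le \frac{1}{a} \sum_{r \in \mathcal{R}} c_r.$$
   Context: An instance $(F, M, \mathcal{R}, c)$ of the feasibility problem (of patient-to-room assignment with gender separation, for a single time period) consists of nonnegative integers $F$ (number of female patients) and $M$ (number of male patients), a finite set $\mathcal{R}$ of rooms, and a capacity $c_r \in \mathbb{N}$ (positive integer) for each room $r \in \mathcal{R}$. The instance is called feasible if there exists a subset $S \subseteq \mathcal{R}$ with $\sum_{r \in S} c_r \ge F$ and $\sum_{r \in \mathcal{R} \setminus S} c_r \ge M$. For $k \in \mathbb{N}$, $R_k := |\{ r \in \mathcal{R} : c_r = k\}|$ denotes the number of rooms of capacity $k$. *)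

theory Defs
  imports Complex_Main
begin

definition valid_instance :: "'r set \<Rightarrow> ('r \<Rightarrow> nat) \<Rightarrow> bool" where
  "valid_instance R c \<longleftrightarrow> finite R \<and> (\<forall>r\<in>R. c r > 0)"

definition feasible :: "nat \<Rightarrow> nat \<Rightarrow> 'r set \<Rightarrow> ('r \<Rightarrow> nat) \<Rightarrow> bool" where
  "feasible F M R c \<longleftrightarrow> (\<exists>S\<subseteq>R. sum c S \<ge> F \<and> sum c (R - S) \<ge> M)"

definition num_rooms :: "'r set \<Rightarrow> ('r \<Rightarrow> nat) \<Rightarrow> nat \<Rightarrow> nat" where
  "num_rooms R c k = card {r\<in>R. c r = k}"

end

theory Submission
  imports Defs
begin

definition allsums :: "'r set \<Rightarrow> ('r \<Rightarrow> nat) \<Rightarrow> bool" where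
  "allsums A d \<longleftrightarrow> (\<forall>v \<le> sum d A. \<exists>S\<subseteq>A. sum d S = v)"

lemma allsums_empty: "allsums {} d"
  unfolding allsums_def by auto

lemma allsums_insert:
  assumes fin: "finite A" and P: "allsums A d" and x: "x \<notin> A" and dx: "d x \<le> sum d A + 1"
  shows "allsums (insert x A) d"
  unfolding allsums_def
proof (intro allI impI)
  fix v assume v: "v \<le> sum d (insert x A)"
  have sx: "sum d (insert x A) = d x + sum d A" using fin x by simp
  show "\<exists>S\<subseteq>insert x A. sum d S = v"
  proof (cases "v \<le> sum d A")
    case True
    then obtain S where "S \<subseteq> A" "sum d S = v" using P unfolding allsums_def by blast
    then show ?thesis by blast
  next
    case False
    then have "v - d x \<le> sum d A" "d x \<le> v" using v sx dx by auto
    then obtain S where S: "S \<subseteq> A" "sum d S = v - d x" using P unfolding allsums_def by blast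
    have "x \<notin> S" using S x by blast
    moreover have "finite S" using S fin finite_subset by blast
    ultimately have "sum d (insert x S) = v" using S \<open>d x \<le> v\<close> by simp
    moreover have "insert x S \<subseteq> insert x A" using S by blast
    ultimately show ?thesis by blast
  qed
qed

lemma allsums_union:
  assumes C: "finite C" and B: "finite B" and P: "allsums B d" and disj: "B \<inter> C = {}"
    and bound: "\<forall>x\<in>C. d x \<le> sum d B + 1"
  shows "allsums (B \<union> C) d"
  using C disj bound
proof (induction C rule: finite_induct)
  case empty
  then show ?case using P by simp
next
  case (insert x C)
  have IH: "allsums (B \<union> C) d" using insert by blast
  have "sum d B \<le> sum d (B \<union> C)" using B insert(1) by (intro sum_mono2) auto
  then have "d x \<le> sum d (B \<union> C) + 1" using insert by auto
  moreover have "x \<notin> B \<union> C" using insert by blast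
  ultimately have "allsums (insert x (B \<union> C)) d"
    using allsums_insert[OF _ IH] B insert(1) by blast
  then show ?case by simp
qed

lemma allsums_superset:
  assumes R: "finite R" and BR: "B \<subseteq> R" and P: "allsums B d"
    and bound: "\<forall>x\<in>R. d x \<le> sum d B + 1"
  shows "allsums R d"
proof -
  have "allsums (B \<union> (R - B)) d"
    using allsums_union[of "R - B" B d] R BR P bound finite_subset by blast
  moreover have "B \<union> (R - B) = R" using BR by blast
  ultimately show ?thesis by simp
qed

lemma allsums_ones:
  assumes "finite B" "\<forall>x\<in>B. d x = 1"
  shows "allsums B d"
  using allsums_union[of B "{}" d] assms allsums_empty by auto

lemma main_equiv:
  fixes F M a :: nat and R :: "'r set" and c d :: "'r \<Rightarrow> nat"
  assumes fin: "finite R" and a: "a \<ge> 1" and cd: "\<forall>r\<in>R. c r = a * d r"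
    and P: "allsums R d"
  shows "feasible F M R c \<longleftrightarrow>
    real_of_int (\<lceil>real F / real a\<rceil> + \<lceil>real M / real a\<rceil>) \<le> (1 / real a) * (\<Sum>r\<in>R. real (c r))"
proof -
  have ap: "real a > 0" using a by simp
  have sc: "\<And>S. S \<subseteq> R \<Longrightarrow> sum c S = a * sum d S"
    using cd by (auto simp: sum_distrib_left intro!: sum.cong)
  define T where "T = sum d R"
  have rhs: "(1 / real a) * (\<Sum>r\<in>R. real (c r)) = real T"
  proof -
    have "(\<Sum>r\<in>R. real (c r)) = real (sum c R)" by simp
    also have "\<dots> = real a * real T" using sc[of R] T_def by simp
    finally show ?thesis using ap by simp
  qed
  have cle: "\<And>G k. G \<le> a * k \<longleftrightarrow> \<lceil>real G / real a\<rceil> \<le> int k"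
  proof -
    fix G k :: nat
    have "\<lceil>real G / real a\<rceil> \<le> int k \<longleftrightarrow> real G / real a \<le> real k"
      by (simp add: ceiling_le_iff)
    also have "\<dots> \<longleftrightarrow> real G \<le> real a * real k" using ap by (simp add: field_simps)
    also have "\<dots> \<longleftrightarrow> G \<le> a * k" by (metis of_nat_le_iff of_nat_mult)
    finally show "G \<le> a * k \<longleftrightarrow> \<lceil>real G / real a\<rceil> \<le> int k" by simp
  qed
  show ?thesis unfolding rhs
  proof
    assume "feasible F M R c"
    then obtain S where S: "S \<subseteq> R" "sum c S \<ge> F" "sum c (R - S) \<ge> M"
      unfolding feasible_def by blast
    have "F \<le> a * sum d S" using S sc by simp
    then have 1: "\<lceil>real F / real a\<rceil> \<le> int (sum d S)" using cle by blast
    have "M \<le> a * sum d (R - S)" using S sc[of "R - S"] by auto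
    then have 2: "\<lceil>real M / real a\<rceil> \<le> int (sum d (R - S))" using cle by blast
    have "sum d (R - S) + sum d S = T" using S fin T_def
      by (metis sum.subset_diff)
    then show "real_of_int (\<lceil>real F / real a\<rceil> + \<lceil>real M / real a\<rceil>) \<le> real T"
      using 1 2 by linarith
  next
    assume H: "real_of_int (\<lceil>real F / real a\<rceil> + \<lceil>real M / real a\<rceil>) \<le> real T"
    define f where "f = \<lceil>real F / real a\<rceil>"
    define m where "m = \<lceil>real M / real a\<rceil>"
    have "real F / real a \<ge> 0" "real M / real a \<ge> 0" by simp_all
    then have f0: "f \<ge> 0" and m0: "m \<ge> 0" unfolding f_def m_def by (metis ceiling_mono ceiling_zero)+
    have fm: "f + m \<le> int T" using H f_def m_def by linarith
    then have "nat f \<le> T" using m0 by linarith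
    then obtain S where S: "S \<subseteq> R" "sum d S = nat f" using P T_def unfolding allsums_def by blast
    have "sum d (R - S) + sum d S = T" using S fin T_def
      by (metis sum.subset_diff)
    then have dm: "m \<le> int (sum d (R - S))" using S fm f0 by linarith
    have "F \<le> a * sum d S" using cle S f0 f_def by simp
    then have "F \<le> sum c S" using sc S by simp
    moreover have "M \<le> a * sum d (R - S)" using cle dm m_def by blast
    then have "M \<le> sum c (R - S)" using sc[of "R - S"] by auto
    ultimately show "feasible F M R c" unfolding feasible_def using S by blast
  qed
qed

lemma case1:
  fixes a n :: nat and R :: "'r set" and c :: "'r \<Rightarrow> nat"
  assumes fin: "finite R" and a: "a \<ge> 1" and h: "\<forall>r\<in>R. c r \<in> {a, n * a}"
    and nr: "num_rooms R c a \<ge> n - 1"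
  shows "allsums R (\<lambda>r. c r div a)"
proof -
  let ?d = "\<lambda>r. c r div a"
  have "card {r\<in>R. c r = a} \<ge> n - 1" using nr unfolding num_rooms_def by simp
  then obtain B where B: "B \<subseteq> {r\<in>R. c r = a}" "card B = n - 1"
    by (meson obtain_subset_with_card_n)
  have "finite {r\<in>R. c r = a}" using fin by simp
  then have finB: "finite B" using B(1) by (rule rev_finite_subset)
  have d1: "\<forall>x\<in>B. ?d x = 1" using B a by auto
  have PB: "allsums B ?d" using allsums_ones[OF finB d1] .
  have sB: "sum ?d B = n - 1" using d1 B(2) by simp
  have "\<forall>x\<in>R. ?d x \<le> sum ?d B + 1"
  proof
    fix x assume "x \<in> R"
    then have "c x = a \<or> c x = n * a" using h by auto
    then have "?d x = 1 \<or> ?d x = n" using a by auto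
    then show "?d x \<le> sum ?d B + 1" using sB by auto
  qed
  then show ?thesis using allsums_superset[OF fin _ PB] B by blast
qed

lemma case2:
  fixes a n :: nat and R :: "'r set" and c :: "'r \<Rightarrow> nat"
  assumes fin: "finite R" and a: "a \<ge> 1"
    and h: "\<forall>r\<in>R. c r \<in> {i * a | i. 1 \<le> i \<and> i \<le> n}"
    and nr: "\<forall>i\<in>{1..n}. num_rooms R c (i * a) > 0"
  shows "allsums R (\<lambda>r. c r div a)"
proof -
  let ?d = "\<lambda>r. c r div a"
  have "\<forall>i<n. \<exists>r. r \<in> R \<and> c r = Suc i * a"
  proof (intro allI impI)
    fix i assume "i < n"
    then have "Suc i \<in> {1..n}" by simp
    then have "card {r\<in>R. c r = Suc i * a} > 0" using nr unfolding num_rooms_def by blast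
    then show "\<exists>r. r \<in> R \<and> c r = Suc i * a" by (metis (mono_tags, lifting) card_gt_0_iff ex_in_conv mem_Collect_eq)
  qed
  then obtain rr where rr: "\<And>i. i < n \<Longrightarrow> rr i \<in> R \<and> c (rr i) = Suc i * a" by metis
  have drr: "\<And>i. i < n \<Longrightarrow> ?d (rr i) = Suc i" using rr a by simp
  have inv: "k \<le> n \<Longrightarrow> allsums (rr ` {..<k}) ?d \<and> sum ?d (rr ` {..<k}) \<ge> k" for k
  proof (induction k)
    case 0
    then show ?case using allsums_empty by simp
  next
    case (Suc k)
    then have IH: "allsums (rr ` {..<k}) ?d" "sum ?d (rr ` {..<k}) \<ge> k" by auto
    have nin: "rr k \<notin> rr ` {..<k}"
    proof
      assume "rr k \<in> rr ` {..<k}"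
      then obtain j where "j < k" "rr k = rr j" by auto
      then have "Suc k = Suc j" using drr Suc.prems by (metis less_trans lessI less_le_trans)
      then show False using \<open>j < k\<close> by simp
    qed
    have eq: "rr ` {..<Suc k} = insert (rr k) (rr ` {..<k})" by (simp add: lessThan_Suc)
    have dk: "?d (rr k) = Suc k" using drr Suc.prems by simp
    have "allsums (insert (rr k) (rr ` {..<k})) ?d"
      using allsums_insert[OF _ IH(1) nin] dk IH(2) by simp
    moreover have "sum ?d (insert (rr k) (rr ` {..<k})) = Suc k + sum ?d (rr ` {..<k})"
      using nin dk by simp
    ultimately show ?case using eq by simp
  qed
  have BR: "rr ` {..<n} \<subseteq> R" using rr by auto
  from inv[of n] have PB: "allsums (rr ` {..<n}) ?d" and sB: "sum ?d (rr ` {..<n}) \<ge> n" by auto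
  have "\<forall>x\<in>R. ?d x \<le> sum ?d (rr ` {..<n}) + 1"
  proof
    fix x assume "x \<in> R"
    then obtain i where "c x = i * a" "i \<le> n" using h by auto
    then have "?d x \<le> n" using a by simp
    then show "?d x \<le> sum ?d (rr ` {..<n}) + 1" using sB by linarith
  qed
  then show ?thesis using allsums_superset[OF fin BR PB] by blast
qed

lemma case3:
  fixes a n :: nat and R :: "'r set" and c :: "'r \<Rightarrow> nat"
  assumes fin: "finite R" and a: "a \<ge> 1"
    and h: "\<forall>r\<in>R. c r \<in> {2 ^ i * a | i. i \<le> n}"
    and nr: "\<forall>i\<in>{0..n}. num_rooms R c (2 ^ i * a) > 0"
  shows "allsums R (\<lambda>r. c r div a)"
proof -
  let ?d = "\<lambda>r. c r div a"
  have "\<forall>i<Suc n. \<exists>r. r \<in> R \<and> c r = 2 ^ i * a"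
  proof (intro allI impI)
    fix i assume "i < Suc n"
    then have "card {r\<in>R. c r = 2 ^ i * a} > 0" using nr unfolding num_rooms_def by auto
    then show "\<exists>r. r \<in> R \<and> c r = 2 ^ i * a" by (metis (mono_tags, lifting) card_gt_0_iff ex_in_conv mem_Collect_eq)
  qed
  then obtain rr where rr: "\<And>i. i < Suc n \<Longrightarrow> rr i \<in> R \<and> c (rr i) = 2 ^ i * a" by metis
  have drr: "\<And>i. i < Suc n \<Longrightarrow> ?d (rr i) = 2 ^ i" using rr a by simp
  have inv: "k \<le> Suc n \<Longrightarrow> allsums (rr ` {..<k}) ?d \<and> sum ?d (rr ` {..<k}) + 1 = 2 ^ k" for k
  proof (induction k)
    case 0
    then show ?case using allsums_empty by simp
  next
    case (Suc k)
    then have IH: "allsums (rr ` {..<k}) ?d" "sum ?d (rr ` {..<k}) + 1 = 2 ^ k" by auto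
    have nin: "rr k \<notin> rr ` {..<k}"
    proof
      assume "rr k \<in> rr ` {..<k}"
      then obtain j where "j < k" "rr k = rr j" by auto
      then have "(2::nat) ^ k = 2 ^ j" using drr Suc.prems by (metis less_trans lessI less_le_trans)
      then show False using \<open>j < k\<close> by simp
    qed
    have eq: "rr ` {..<Suc k} = insert (rr k) (rr ` {..<k})" by (simp add: lessThan_Suc)
    have dk: "?d (rr k) = 2 ^ k" using drr Suc.prems by simp
    have "allsums (insert (rr k) (rr ` {..<k})) ?d"
      using allsums_insert[OF _ IH(1) nin] dk IH(2) by simp
    moreover have "sum ?d (insert (rr k) (rr ` {..<k})) = 2 ^ k + sum ?d (rr ` {..<k})"
      using nin dk by simp
    ultimately show ?case using eq IH(2) by simp
  qed
  have BR: "rr ` {..<Suc n} \<subseteq> R" using rr by auto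
  from inv[of "Suc n"] have PB: "allsums (rr ` {..<Suc n}) ?d"
    and sB: "sum ?d (rr ` {..<Suc n}) + 1 = 2 ^ Suc n" by auto
  have "\<forall>x\<in>R. ?d x \<le> sum ?d (rr ` {..<Suc n}) + 1"
  proof
    fix x assume "x \<in> R"
    then obtain i where "c x = 2 ^ i * a" "i \<le> n" using h by auto
    then have "?d x = 2 ^ i" using a by simp
    also have "\<dots> \<le> 2 ^ Suc n" using \<open>i \<le> n\<close> by (intro power_increasing) auto
    finally show "?d x \<le> sum ?d (rr ` {..<Suc n}) + 1" using sB by linarith
  qed
  then show ?thesis using allsums_superset[OF fin BR PB] by blast
qed

theorem mainTheorem2:
  fixes F M a n :: nat and R :: "'r set" and c :: "'r \<Rightarrow> nat"
  assumes inst: "valid_instance R c"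
    and a_pos: "a \<ge> 1"
    and cases: "((\<forall>r\<in>R. c r \<in> {a, n * a}) \<and> num_rooms R c a \<ge> n - 1)
              \<or> ((\<forall>r\<in>R. c r \<in> {i * a | i. 1 \<le> i \<and> i \<le> n}) \<and> (\<forall>i\<in>{1..n}. num_rooms R c (i * a) > 0))
              \<or> ((\<forall>r\<in>R. c r \<in> {2 ^ i * a | i. i \<le> n}) \<and> (\<forall>i\<in>{0..n}. num_rooms R c (2 ^ i * a) > 0))"
  shows "feasible F M R c \<longleftrightarrow>
    real_of_int (\<lceil>real F / real a\<rceil> + \<lceil>real M / real a\<rceil>) \<le> (1 / real a) * (\<Sum>r\<in>R. real (c r))"
proof -
  have fin: "finite R" using inst unfolding valid_instance_def by simp
  have P: "allsums R (\<lambda>r. c r div a)"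
    using cases case1[OF fin a_pos] case2[OF fin a_pos] case3[OF fin a_pos] by blast
  have cd: "\<forall>r\<in>R. c r = a * (c r div a)"
  proof
    fix r assume "r \<in> R"
    then have "\<exists>k. c r = k * a" using cases
      by (elim disjE conjE) (metis insert_iff mult_1 singletonD, blast+)
    then show "c r = a * (c r div a)" by auto
  qed
  show ?thesis using main_equiv[OF fin a_pos cd P] .
qed

end
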